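(* Fix a round $t$ and a nonempty set $\bm{S}_t$ of scheduled devices. For device $k$, let the local computation latency be $\mathcal{T}_k^{\rm L}=\tau D_kC_k/(f_kn_k)$ and computation energy $E_{k}^{\rm L}=\kappa\tau D_kC_kf_k^2/n_k$. Given bandwidth fraction $\theta_{k,t}\in[0,1]$ and transmit power $p_{k,t}$, the upload latency is $\mathcal{T}_{k,t}^{\rm U}=\frac{Qq}{\theta_{k,t}B\log_2(1+\frac{p_{k,t}h_{k,t}}{\theta_{k,t}BN_0})}$ and the upload energy is $E_{k,t}^{\rm U}=p_{k,t}\mathcal{T}_{k,t}^{\rm U}=\frac{\theta_{k,t}B\mathcal{T}_{k,t}^{\rm U}N_0}{h_{k,t}}\big(2^{\frac{Qq}{\theta_{k,t}B\mathcal{T}_{k,t}^{\rm U}}}-1\big)$; let $E_{k,t}=E_k^{\rm L}+E_{k,t}^{\rm U}$. Consider the problem $$\mathcal{P}_1:\ \min_{\bm{\theta}_t,\bm{p}_t}\ \sum_{k\in\bm{S}_t}q_k(t)E_{k,t}\quad\text{s.t. } \mathcal{T}_k^{\rm L}+\mathcal{T}_{k,t}^{\rm U}\le\mathcal{T}_{\max}\ \forall k,\ \ \sum_{k=1}^K\theta_{k,t}\le1,\ \ 0\le\theta_{k,t}\le1\ \forall k.$$ Then the optimal solution of $\mathcal{P}_1$ satisfies $\mathcal{T}_{k,t}^{\rm U}=\mathcal{T}_{\max}-\mathcal{T}_k^{\rm L}$, and the optimal transmit power of device $k$ satisfies $$p_{k,t}=\frac{\theta_{k,t}BN_0}{h_{k,t}}\Big(2^{\frac{Qq}{(\mathcal{T}_{\max}-\mathcal{T}_k^{\rm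 L})\theta_{k,t}B}}-1\Big).$$
   Context: Parameters: $\tau$ local iterations, $D_k$ number of local samples, $C_k$ FLOPs per sample, $f_k$ CPU frequency, $n_k$ FLOPs per cycle, $\kappa$ power coefficient, $B$ total bandwidth (Hz), $h_{k,t}>0$ channel gain, $N_0$ noise power spectral density, $Q$ number of uploaded parameters and $q$ bits per parameter, $\mathcal{T}_{\max}$ the per-round deadline, and $q_k(t)\ge0$ a virtual energy queue of device $k$ (weights). *)

theory Defs
  imports Complex_Main
begin

definition T_L :: "real \<Rightarrow> real \<Rightarrow> real \<Rightarrow> real \<Rightarrow> real \<Rightarrow> real" where
  "T_L tau Dk Ck fk nk = tau * Dk * Ck / (fk * nk)"

definition E_L :: "real \<Rightarrow> real \<Rightarrow> real \<Rightarrow> real \<Rightarrow> real \<Rightarrow> real \<Rightarrow> real" where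
  "E_L kappa tau Dk Ck fk nk = kappa * tau * Dk * Ck * fk ^ 2 / nk"

definition T_U :: "real \<Rightarrow> real \<Rightarrow> real \<Rightarrow> real \<Rightarrow> real \<Rightarrow> real \<Rightarrow> real \<Rightarrow> real" where
  "T_U Q qb B N0 hk th pk = Q * qb / (th * B * log 2 (1 + pk * hk / (th * B * N0)))"

definition E_U :: "real \<Rightarrow> real \<Rightarrow> real \<Rightarrow> real \<Rightarrow> real \<Rightarrow> real \<Rightarrow> real \<Rightarrow> real" where
  "E_U Q qb B N0 hk th pk = pk * T_U Q qb B N0 hk th pk"

text \<open>Feasible set of problem P1 (devices 1..K, scheduled set S).
  Bandwidth fractions and powers of scheduled devices must be positive so that
  the upload latency is well defined (finite).\<close>
definition P1_feasible ::
  "nat \<Rightarrow> nat set \<Rightarrow> real \<Rightarrow> (nat \<Rightarrow> real) \<Rightarrow> (nat \<Rightarrow> real) \<Rightarrow> (nat \<Rightarrow> real) \<Rightarrow> (nat \<Rightarrow> real)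
   \<Rightarrow> real \<Rightarrow> real \<Rightarrow> real \<Rightarrow> real \<Rightarrow> (nat \<Rightarrow> real) \<Rightarrow> real
   \<Rightarrow> (nat \<Rightarrow> real) \<Rightarrow> (nat \<Rightarrow> real) \<Rightarrow> bool" where
  "P1_feasible K S tau D C f n Q qb B N0 h Tmax theta p \<longleftrightarrow>
     (\<forall>k\<in>{1..K}. 0 \<le> theta k \<and> theta k \<le> 1) \<and>
     (\<Sum>k=1..K. theta k) \<le> 1 \<and>
     (\<forall>k\<in>S. 0 < theta k \<and> 0 < p k \<and>
        T_L tau (D k) (C k) (f k) (n k) + T_U Q qb B N0 (h k) (theta k) (p k) \<le> Tmax)"

definition P1_obj ::
  "nat set \<Rightarrow> (nat \<Rightarrow> real) \<Rightarrow> real \<Rightarrow> real \<Rightarrow> (nat \<Rightarrow> real) \<Rightarrow> (nat \<Rightarrow> real) \<Rightarrow> (nat \<Rightarrow> real)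
   \<Rightarrow> (nat \<Rightarrow> real) \<Rightarrow> real \<Rightarrow> real \<Rightarrow> real \<Rightarrow> real \<Rightarrow> (nat \<Rightarrow> real)
   \<Rightarrow> (nat \<Rightarrow> real) \<Rightarrow> (nat \<Rightarrow> real) \<Rightarrow> real" where
  "P1_obj S qk kappa tau D C f n Q qb B N0 h theta p =
     (\<Sum>k\<in>S. qk k * (E_L kappa tau (D k) (C k) (f k) (n k) + E_U Q qb B N0 (h k) (theta k) (p k)))"

end

theory Submission
  imports Defs
begin


lemma key: fixes x y :: real assumes "0 < y" "y < x"
  shows "y / ln (1 + y) < x / ln (1 + x)"
proof -
  have d: "ln (1 + x) / x < ln (1 + y) / y"
  proof (rule DERIV_neg_imp_decreasing[where f = "\<lambda>t. ln (1 + t) / t"])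
    show "y < x" by fact
    fix t :: real assume t: "y \<le> t" "t \<le> x"
    hence tp: "0 < t" using assms by linarith
    have "DERIV (\<lambda>t. ln (1 + t) / t) t :> ((1 / (1 + t)) * t - ln (1 + t) * 1) / (t * t)"
      using tp by (auto intro!: derivative_eq_intros)
    moreover have "((1 / (1 + t)) * t - ln (1 + t) * 1) / (t * t) < 0"
    proof -
      have "ln (t + 1) > t / (1 + t)" using ln_add1_gt tp by blast
      hence "(1 / (1 + t)) * t - ln (1 + t) * 1 < 0" by (simp add: add.commute)
      thus ?thesis using tp by (simp add: divide_neg_pos)
    qed
    ultimately show "\<exists>z. DERIV (\<lambda>t. ln (1 + t) / t) t :> z \<and> z < 0" by blast
  qed
  have ly: "0 < ln (1 + y)" "0 < ln (1+x)" using assms by auto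
  show ?thesis using d ly assms
    by (simp add: field_simps)
qed

lemma EU_form: assumes "0<th" "0<B" "0<N0" "0<hk" "0<pk"
  shows "E_U Q qb B N0 hk th pk = (th*B*N0/hk * (Q*qb*ln 2/(th*B))) * ((pk*hk/(th*B*N0)) / ln (1 + pk*hk/(th*B*N0)))"
  using assms by (simp add: E_U_def T_U_def log_def field_simps)

lemma TU_inv: assumes "0<th" "0<B" "0<N0" "0<hk" "0<pk" "0 < Q" "0 < qb"
  and "T_U Q qb B N0 hk th pk = T"
  shows "pk = th * B * N0 / hk * (2 powr (Q * qb / (T * th * B)) - 1)"
proof -
  define X where "X = pk*hk/(th*B*N0)"
  have Xp: "0 < X" using assms by (simp add: X_def)
  have L: "0 < log 2 (1+X)" using Xp by simp
  have "T = Q*qb/(th*B*log 2 (1+X))" using assms(8) by (simp add: T_U_def X_def)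
  note e = this
  have "log 2 (1+X) = Q*qb/(T*th*B)" 
  proof -
    have "Q*qb/(T*th*B) = Q*qb/((Q*qb/(th*B*log 2 (1+X)))*th*B)" by (simp add: e)
    also have "\<dots> = log 2 (1+X)" using L assms(1,2,6,7) by (simp add: field_simps)
    finally show ?thesis by simp
  qed
  moreover have "2 powr log 2 (1+X) = 1+X" using Xp by (intro powr_log_cancel) auto
  ultimately have "1 + X = 2 powr (Q*qb/(T*th*B))" by simp
  hence "X = 2 powr (Q*qb/(T*th*B)) - 1" by simp
  moreover have "pk = th*B*N0/hk * X" using assms(1-4) unfolding X_def by (simp add: field_simps)
  ultimately show ?thesis by simp
qed

lemma TU_at: assumes "0<th" "0<B" "0<N0" "0<hk" "0 < c"
  shows "T_U Q qb B N0 hk th (th * B * N0 / hk * (2 powr c - 1)) = Q*qb/(th*B*c)"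
proof -
  have "(th * B * N0 / hk * (2 powr c - 1)) * hk / (th*B*N0) = 2 powr c - 1" using assms by (simp add: field_simps)
  hence "log 2 (1 + (th * B * N0 / hk * (2 powr c - 1)) * hk / (th*B*N0)) = c" by simp
  thus ?thesis by (simp add: T_U_def)
qed

theorem proposition1:
  fixes K :: nat and S :: "nat set"
    and tau kappa Q qb B N0 Tmax :: real
    and D C f n h qk :: "nat \<Rightarrow> real"
    and theta p :: "nat \<Rightarrow> real"
  assumes S_sub: "S \<subseteq> {1..K}" and S_ne: "S \<noteq> {}"
    and pos: "0 < tau" "0 < kappa" "0 < Q" "0 < qb" "0 < B" "0 < N0"
    and dev_pos: "\<And>k. k \<in> {1..K} \<Longrightarrow> 0 < D k \<and> 0 < C k \<and> 0 < f k \<and> 0 < n k \<and> 0 < h k"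
    and q_nonneg: "\<And>k. k \<in> {1..K} \<Longrightarrow> 0 \<le> qk k"
    and feas: "P1_feasible K S tau D C f n Q qb B N0 h Tmax theta p"
    and opt: "\<And>theta' p'. P1_feasible K S tau D C f n Q qb B N0 h Tmax theta' p' \<Longrightarrow>
               P1_obj S qk kappa tau D C f n Q qb B N0 h theta p
                 \<le> P1_obj S qk kappa tau D C f n Q qb B N0 h theta' p'"
  shows "\<forall>k\<in>S. 0 < qk k \<longrightarrow>
           T_U Q qb B N0 (h k) (theta k) (p k) = Tmax - T_L tau (D k) (C k) (f k) (n k) \<and>
           p k = theta k * B * N0 / h k *
                 (2 powr (Q * qb / ((Tmax - T_L tau (D k) (C k) (f k) (n k)) * theta k * B)) - 1)"
  proof (intro ballI impI)
  fix k assume kS: "k \<in> S" and qp: "0 < qk k"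
  have kK: "k \<in> {1..K}" using kS S_sub by blast
  have finS: "finite S" using S_sub finite_subset by blast
  note dp = dev_pos[OF kK]
  have fk: "0 < theta k" "0 < p k"
    "T_L tau (D k) (C k) (f k) (n k) + T_U Q qb B N0 (h k) (theta k) (p k) \<le> Tmax"
    using feas kS unfolding P1_feasible_def by auto
  define TL where "TL = T_L tau (D k) (C k) (f k) (n k)"
  define T where "T = Tmax - TL"
  define X where "X = p k * h k / (theta k * B * N0)"
  have Xp: "0 < X" using fk dp pos by (simp add: X_def)
  have L: "0 < log 2 (1+X)" using Xp by simp
  have TUe: "T_U Q qb B N0 (h k) (theta k) (p k) = Q*qb/(theta k*B*log 2 (1+X))"
    by (simp add: T_U_def X_def)
  have TUp: "0 < T_U Q qb B N0 (h k) (theta k) (p k)" unfolding TUe using L fk pos by simp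
  have TUle: "T_U Q qb B N0 (h k) (theta k) (p k) \<le> T" using fk(3) by (simp add: T_def TL_def)
  have TUeq: "T_U Q qb B N0 (h k) (theta k) (p k) = T"
  proof (rule ccontr)
    assume "T_U Q qb B N0 (h k) (theta k) (p k) \<noteq> T"
    hence lt: "T_U Q qb B N0 (h k) (theta k) (p k) < T" using TUle by simp
    have Tp: "0 < T" using lt TUp by simp
    define c where "c = Q*qb/(theta k*B*T)"
    have cp: "0 < c" using Tp fk pos by (simp add: c_def)
    define p' where "p' = theta k * B * N0 / h k * (2 powr c - 1)"
    define X' where "X' = 2 powr c - 1"
    have X'p: "0 < X'" using cp by (simp add: X'_def)
    have p'p: "0 < p'" using X'p fk dp pos by (simp add: p'_def X'_def)
    have X'e: "X' = p' * h k / (theta k * B * N0)" using fk dp pos by (simp add: p'_def X'_def)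
    have cT: "Q*qb/(theta k*B*c) = T" unfolding c_def using Tp fk pos by (simp add: field_simps)
    have TU': "T_U Q qb B N0 (h k) (theta k) p' = T"
    proof -
      have "T_U Q qb B N0 (h k) (theta k) p' = Q*qb/(theta k*B*c)"
        unfolding p'_def using fk dp pos cp by (intro TU_at) auto
      also have "\<dots> = T" by (rule cT)
      finally show ?thesis .
    qed
    have "c < log 2 (1+X)"
    proof -
      have "Q*qb/(theta k*B*log 2 (1+X)) < Q*qb/(theta k*B*c)"
        using lt TUe cT by simp
      thus ?thesis using L cp fk pos by (simp add: divide_less_cancel frac_less2 field_simps)
    qed
    hence "2 powr c < 2 powr log 2 (1+X)" by simp
    also have "\<dots> = 1 + X" using Xp by (intro powr_log_cancel) auto
    finally have XX: "X' < X" by (simp add: X'_def)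
    have EU_lt: "E_U Q qb B N0 (h k) (theta k) p' < E_U Q qb B N0 (h k) (theta k) (p k)"
    proof -
      have cc: "0 < theta k*B*N0/h k * (Q*qb*ln 2/(theta k*B))" using fk dp pos by simp
      have "E_U Q qb B N0 (h k) (theta k) p' = (theta k*B*N0/h k * (Q*qb*ln 2/(theta k*B))) * (X' / ln (1 + X'))"
        unfolding X'e using fk dp pos p'p by (intro EU_form) auto
      also have "\<dots> < (theta k*B*N0/h k * (Q*qb*ln 2/(theta k*B))) * (X / ln (1 + X))"
        using key[OF X'p XX] cc by (rule mult_strict_left_mono)
      also have "\<dots> = E_U Q qb B N0 (h k) (theta k) (p k)"
        unfolding X_def using fk dp pos by (intro EU_form[symmetric]) auto
      finally show ?thesis .
    qed
    define pn where "pn = p(k := p')"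
    have feas': "P1_feasible K S tau D C f n Q qb B N0 h Tmax theta pn"
      using feas TU' p'p unfolding P1_feasible_def pn_def T_def TL_def by auto
    define g where "g = (\<lambda>pp j. qk j * (E_L kappa tau (D j) (C j) (f j) (n j) + E_U Q qb B N0 (h j) (theta j) (pp j)))"
    have o1: "P1_obj S qk kappa tau D C f n Q qb B N0 h theta p = g p k + sum (g p) (S - {k})"
      unfolding P1_obj_def g_def using sum.remove[OF finS kS] by simp
    have o2: "P1_obj S qk kappa tau D C f n Q qb B N0 h theta pn = g pn k + sum (g pn) (S - {k})"
      unfolding P1_obj_def g_def using sum.remove[OF finS kS] by simp
    have s: "sum (g pn) (S - {k}) = sum (g p) (S - {k})"
      by (rule sum.cong) (auto simp: g_def pn_def)
    have "g pn k < g p k" unfolding g_def pn_def using EU_lt qp by simp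
    hence "P1_obj S qk kappa tau D C f n Q qb B N0 h theta pn < P1_obj S qk kappa tau D C f n Q qb B N0 h theta p"
      using o1 o2 s by simp
    thus False using opt[OF feas'] by simp
  qed
  show "T_U Q qb B N0 (h k) (theta k) (p k) = Tmax - T_L tau (D k) (C k) (f k) (n k) \<and>
           p k = theta k * B * N0 / h k *
                 (2 powr (Q * qb / ((Tmax - T_L tau (D k) (C k) (f k) (n k)) * theta k * B)) - 1)"
  proof
    show "T_U Q qb B N0 (h k) (theta k) (p k) = Tmax - T_L tau (D k) (C k) (f k) (n k)"
      using TUeq by (simp add: T_def TL_def)
    show "p k = theta k * B * N0 / h k *
                 (2 powr (Q * qb / ((Tmax - T_L tau (D k) (C k) (f k) (n k)) * theta k * B)) - 1)"
      using TU_inv[OF fk(1) pos(5) pos(6) _ fk(2) pos(3) pos(4) TUeq] dp by (simp add: T_def TL_def)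
  qed
qed

end
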